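(* Let $G$ be a finite abstract simplicial complex with connection matrix $L$, and let $g=L^{-1}$ (which exists and has integer entries). Then $\sum_{x,y\in G} g(x,y)=\chi(G)$, where $\chi(G)=\sum_{x\in G}\omega(x)$.
   Context: A finite abstract simplicial complex $G$ is a finite set of non-empty finite sets closed under taking non-empty subsets; its elements are called simplices. For $x\in G$ let $\dim(x)=|x|-1$ and $\omega(x)=(-1)^{\dim(x)}$. The connection matrix $L$ of $G$ is indexed by the simplices with $L(x,y)=1$ if $x\cap y\neq\emptyset$ and $L(x,y)=0$ otherwise. $\chi(G)=\sum_{x\in G}\omega(x)$ is the Euler characteristic. *)

theory Defs
  imports Complex_Main
begin

definition simplicial_complex :: "'a set set \<Rightarrow> bool" where
  "simplicial_complex G \<longleftrightarrow> finite G \<and> (\<forall>x\<in>G. finite x \<and> x \<noteq> {} \<and>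
      (\<forall>y. y \<subseteq> x \<and> y \<noteq> {} \<longrightarrow> y \<in> G))"

definition dim :: "'a set \<Rightarrow> int" where
  "dim x = int (card x) - 1"

definition omega :: "'a set \<Rightarrow> int" where
  "omega x = (-1) ^ nat (dim x)"

definition euler_char :: "'a set set \<Rightarrow> int" where
  "euler_char G = (\<Sum>x\<in>G. omega x)"

text \<open>Connection matrix, as a function on pairs of simplices (only its values on G x G matter).\<close>
definition connection :: "'a set \<Rightarrow> 'a set \<Rightarrow> 'b::{zero,one}" where
  "connection x y = (if x \<inter> y \<noteq> {} then 1 else 0)"

definition is_inverse_on :: "'i set \<Rightarrow> ('i \<Rightarrow> 'i \<Rightarrow> 'b::comm_ring_1) \<Rightarrow> ('i \<Rightarrow> 'i \<Rightarrow> 'b) \<Rightarrow> bool" where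
  "is_inverse_on G M g \<longleftrightarrow>
     (\<forall>x\<in>G. \<forall>y\<in>G. (\<Sum>z\<in>G. M x z * g z y) = (if x = y then 1 else 0)) \<and>
     (\<forall>x\<in>G. \<forall>y\<in>G. (\<Sum>z\<in>G. g x z * M z y) = (if x = y then 1 else 0))"

end

theory Submission
  imports Defs
begin

definition sg :: "'a set \<Rightarrow> int" where "sg z = (-1) ^ card z"

lemma pow_alt:
  assumes "finite A" shows "(\<Sum>z\<in>Pow A. sg z) = (if A = {} then 1 else 0)"
  using assms
proof (induction A rule: finite_induct)
  case empty then show ?case by (simp add: sg_def)
next
  case (insert a A)
  have d: "Pow A \<inter> insert a ` Pow A = {}" using insert.hyps by auto
  have inj: "inj_on (insert a) (Pow A)"
    unfolding inj_on_def
  proof (intro ballI impI)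
    fix u v assume "u \<in> Pow A" "v \<in> Pow A" "insert a u = insert a v"
    then show "u = v" using insert.hyps by (metis PowD insert_ident subsetD)
  qed
  have "(\<Sum>z\<in>insert a ` Pow A. sg z) = (\<Sum>z\<in>Pow A. sg (insert a z))"
    by (rule sum.reindex[OF inj, unfolded comp_def])
  also have "\<dots> = (\<Sum>z\<in>Pow A. - sg z)"
  proof (rule sum.cong)
    fix z assume "z \<in> Pow A"
    then have "a \<notin> z" "finite z" using insert.hyps finite_subset by auto
    then show "sg (insert a z) = - sg z" by (simp add: sg_def)
  qed simp
  finally have e: "(\<Sum>z\<in>insert a ` Pow A. sg z) = - (\<Sum>z\<in>Pow A. sg z)"
    by (simp add: sum_negf)
  have "(\<Sum>z\<in>Pow (insert a A). sg z) = (\<Sum>z\<in>Pow A. sg z) + (\<Sum>z\<in>insert a ` Pow A. sg z)"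
    unfolding Pow_insert using d insert.hyps by (intro sum.union_disjoint) auto
  then show ?case using e by simp
qed

lemma lemB:
  assumes "finite w" "w \<noteq> {}"
  shows "(\<Sum>z\<in>{z. z \<subseteq> w \<and> z \<inter> x \<noteq> {}}. sg z) = (if w \<subseteq> x then -1 else 0)"
proof -
  have sub: "Pow (w - x) \<subseteq> Pow w" by auto
  have eq: "Pow w - Pow (w - x) = {z. z \<subseteq> w \<and> z \<inter> x \<noteq> {}}" by auto
  have "(\<Sum>z\<in>Pow w. sg z) = (\<Sum>z\<in>Pow w - Pow (w - x). sg z) + (\<Sum>z\<in>Pow (w - x). sg z)"
    using sum.subset_diff[OF sub] assms by simp
  then show ?thesis using pow_alt[of w] pow_alt[of "w - x"] assms eq
    by (auto split: if_splits)
qed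

lemma lemC:
  assumes "finite x" "y \<subseteq> x"
  shows "(\<Sum>w\<in>{w. y \<subseteq> w \<and> w \<subseteq> x}. sg w) = (if x = y then sg x else 0)"
proof -
  have im: "{w. y \<subseteq> w \<and> w \<subseteq> x} = (\<lambda>u. y \<union> u) ` Pow (x - y)"
  proof
    show "{w. y \<subseteq> w \<and> w \<subseteq> x} \<subseteq> (\<lambda>u. y \<union> u) ` Pow (x - y)"
    proof
      fix w assume "w \<in> {w. y \<subseteq> w \<and> w \<subseteq> x}"
      then have "w = y \<union> (w - y)" "w - y \<in> Pow (x - y)" by auto
      then show "w \<in> (\<lambda>u. y \<union> u) ` Pow (x - y)" by (rule image_eqI)
    qed
  qed (use assms in auto)
  have inj: "inj_on (\<lambda>u. y \<union> u) (Pow (x - y))" unfolding inj_on_def by auto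
  have "(\<Sum>w\<in>{w. y \<subseteq> w \<and> w \<subseteq> x}. sg w) = (\<Sum>u\<in>Pow (x - y). sg (y \<union> u))"
    unfolding im by (rule sum.reindex[OF inj, unfolded comp_def])
  also have "\<dots> = (\<Sum>u\<in>Pow (x - y). sg y * sg u)"
  proof (rule sum.cong)
    fix u assume "u \<in> Pow (x - y)"
    then have "finite u" "finite y" "y \<inter> u = {}" using assms by (auto intro: finite_subset[of _ x])
    then show "sg (y \<union> u) = sg y * sg u" by (simp add: sg_def card_Un_disjoint power_add)
  qed simp
  also have "\<dots> = sg y * (if x - y = {} then 1 else 0)"
    using pow_alt[of "x - y"] assms by (simp add: sum_distrib_left[symmetric])
  finally show ?thesis using assms by auto
qed

lemma sg_sq: "sg y * sg y = 1"
  by (simp add: sg_def flip: power_add) 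

definition g0 :: "'a set set \<Rightarrow> 'a set \<Rightarrow> 'a set \<Rightarrow> int" where
  "g0 G x y = - sg x * sg y * (\<Sum>w\<in>G. if x \<subseteq> w \<and> y \<subseteq> w then sg w else 0)"

lemma conn_int: "(connection x y :: 'b::comm_ring_1) = of_int (connection x y)"
  by (simp add: connection_def)

lemma conn_sym: "(connection x y :: 'b::{zero,one}) = connection y x"
  by (auto simp add: connection_def)

lemma g0_sym: "g0 G x y = g0 G y x"
proof -
  have "\<And>w. (x \<subseteq> w \<and> y \<subseteq> w) = (y \<subseteq> w \<and> x \<subseteq> w)" by blast
  then show ?thesis unfolding g0_def by (simp add: mult.commute)
qed

lemma main_inv:
  assumes G: "simplicial_complex G" and x: "x \<in> G" and y: "y \<in> G"
  shows "(\<Sum>z\<in>G. connection x z * g0 G z y) = (if x = y then 1 else 0)"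
proof -
  have fin: "finite G" using G by (simp add: simplicial_complex_def)
  have clos: "\<And>w v. w \<in> G \<Longrightarrow> v \<subseteq> w \<Longrightarrow> v \<noteq> {} \<Longrightarrow> v \<in> G"
    using G unfolding simplicial_complex_def by blast
  have fw: "\<And>w. w \<in> G \<Longrightarrow> finite w \<and> w \<noteq> {}"
    using G unfolding simplicial_complex_def by blast
  have step1: "connection x z * g0 G z y
      = (\<Sum>w\<in>G. if x \<inter> z \<noteq> {} \<and> z \<subseteq> w \<and> y \<subseteq> w then - sg z * sg y * sg w else 0)" for z
  proof (cases "x \<inter> z = {}")
    case True
    then show ?thesis by (simp add: connection_def)
  next
    case False
    then have "connection x z * g0 G z y = (\<Sum>w\<in>G. - sg z * sg y * (if z \<subseteq> w \<and> y \<subseteq> w then sg w else 0))"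
      by (simp add: connection_def g0_def sum_distrib_left)
    also have "\<dots> = (\<Sum>w\<in>G. if x \<inter> z \<noteq> {} \<and> z \<subseteq> w \<and> y \<subseteq> w then - sg z * sg y * sg w else 0)"
      using False by (intro sum.cong refl) simp
    finally show ?thesis .
  qed
  have "(\<Sum>z\<in>G. connection x z * g0 G z y)
      = (\<Sum>z\<in>G. \<Sum>w\<in>G. if x \<inter> z \<noteq> {} \<and> z \<subseteq> w \<and> y \<subseteq> w then - sg z * sg y * sg w else 0)"
    using step1 by (intro sum.cong refl)
  also have "\<dots> = (\<Sum>w\<in>G. \<Sum>z\<in>G. if x \<inter> z \<noteq> {} \<and> z \<subseteq> w \<and> y \<subseteq> w then - sg z * sg y * sg w else 0)"
    by (rule sum.swap)
  also have "\<dots> = (\<Sum>w\<in>G. if y \<subseteq> w \<and> w \<subseteq> x then sg y * sg w else 0)"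
  proof (rule sum.cong[OF refl])
    fix w assume w: "w \<in> G"
    have setq: "{z\<in>G. z \<subseteq> w \<and> z \<inter> x \<noteq> {}} = {z. z \<subseteq> w \<and> z \<inter> x \<noteq> {}}"
      using clos[OF w] by auto
    have "(\<Sum>z\<in>G. if x \<inter> z \<noteq> {} \<and> z \<subseteq> w \<and> y \<subseteq> w then - sg z * sg y * sg w else 0)
       = (if y \<subseteq> w then - sg y * sg w * (\<Sum>z\<in>{z\<in>G. z \<subseteq> w \<and> z \<inter> x \<noteq> {}}. sg z) else 0)"
    proof (cases "y \<subseteq> w")
      case False
      then show ?thesis by simp
    next
      case True
      have "(\<Sum>z\<in>G. if x \<inter> z \<noteq> {} \<and> z \<subseteq> w \<and> y \<subseteq> w then - sg z * sg y * sg w else 0)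
          = (\<Sum>z\<in>G. if z \<subseteq> w \<and> z \<inter> x \<noteq> {} then - sg y * sg w * sg z else 0)"
        using True by (intro sum.cong refl) (auto simp: Int_commute)
      also have "\<dots> = (\<Sum>z\<in>{z\<in>G. z \<subseteq> w \<and> z \<inter> x \<noteq> {}}. - sg y * sg w * sg z)"
        using fin by (rule sum.inter_filter[symmetric])
      also have "\<dots> = - sg y * sg w * (\<Sum>z\<in>{z\<in>G. z \<subseteq> w \<and> z \<inter> x \<noteq> {}}. sg z)"
        by (rule sum_distrib_left[symmetric])
      finally show ?thesis using True by simp
    qed
    also have "\<dots> = (if y \<subseteq> w \<and> w \<subseteq> x then sg y * sg w else 0)"
      unfolding setq using lemB[of w x] fw[OF w] by auto
    finally show "(\<Sum>z\<in>G. if x \<inter> z \<noteq> {} \<and> z \<subseteq> w \<and> y \<subseteq> w then - sg z * sg y * sg w else 0)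
       = (if y \<subseteq> w \<and> w \<subseteq> x then sg y * sg w else 0)" .
  qed
  also have "\<dots> = sg y * (\<Sum>w\<in>{w\<in>G. y \<subseteq> w \<and> w \<subseteq> x}. sg w)"
    using fin by (simp add: sum_distrib_left sum.inter_filter) (intro sum.cong refl, simp)
  also have "{w\<in>G. y \<subseteq> w \<and> w \<subseteq> x} = {w. y \<subseteq> w \<and> w \<subseteq> x}"
    using clos[OF x] fw[OF y] by auto
  also have "sg y * (\<Sum>w\<in>{w. y \<subseteq> w \<and> w \<subseteq> x}. sg w) = (if x = y then 1 else 0)"
  proof (cases "y \<subseteq> x")
    case True
    then show ?thesis using lemC[of x y] fw[OF x] sg_sq[of y] by auto
  next
    case False
    then have e: "{w. y \<subseteq> w \<and> w \<subseteq> x} = {}" by auto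
    have "x \<noteq> y" using False by auto
    then show ?thesis unfolding e by simp
  qed
  finally show ?thesis .
qed

lemma g0_inverse:
  assumes G: "simplicial_complex G"
  shows "is_inverse_on G connection (g0 G)"
  unfolding is_inverse_on_def
proof (intro conjI ballI)
  fix x y assume "x \<in> G" "y \<in> G"
  then show "(\<Sum>z\<in>G. connection x z * g0 G z y) = (if x = y then 1 else 0)"
    using main_inv[OF G] by blast
  have "(\<Sum>z\<in>G. g0 G x z * connection z y) = (\<Sum>z\<in>G. connection y z * g0 G z x)"
    by (simp add: g0_sym conn_sym mult.commute)
  also have "\<dots> = (if x = y then 1 else 0)" using main_inv[OF G \<open>y \<in> G\<close> \<open>x \<in> G\<close>] by auto
  finally show "(\<Sum>z\<in>G. g0 G x z * connection z y) = (if x = y then 1 else 0)" .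
qed

lemma g0_inverse_real:
  assumes G: "simplicial_complex G"
  shows "is_inverse_on G connection (\<lambda>x y. (of_int (g0 G x y) :: 'b::comm_ring_1))"
  using g0_inverse[OF G] unfolding is_inverse_on_def
  by (simp add: conn_int[where 'b='b] flip: of_int_mult of_int_sum)

lemma inverse_unique:
  assumes "is_inverse_on G M g" "is_inverse_on G M h" "finite G" "x \<in> G" "y \<in> G"
  shows "g x y = h x y"
proof -
  have "g x y = (\<Sum>z\<in>G. g x z * (if z = y then 1 else 0))"
    using assms by (simp add: if_distrib sum.delta cong: if_cong)
  also have "\<dots> = (\<Sum>z\<in>G. g x z * (\<Sum>u\<in>G. M z u * h u y))"
    using assms(2,5) unfolding is_inverse_on_def by (intro sum.cong) auto
  also have "\<dots> = (\<Sum>u\<in>G. (\<Sum>z\<in>G. g x z * M z u) * h u y)"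
    by (simp add: sum_distrib_left sum_distrib_right mult.assoc) (rule sum.swap)
  also have "\<dots> = (\<Sum>u\<in>G. (if x = u then 1 else 0) * h u y)"
    using assms(1,4) unfolding is_inverse_on_def by (intro sum.cong) auto
  also have "\<dots> = (\<Sum>u\<in>G. if x = u then h u y else 0)"
    by (intro sum.cong) auto
  also have "\<dots> = h x y" using assms by simp
  finally show ?thesis .
qed

lemma omega_sg:
  assumes "finite x" "x \<noteq> {}" shows "omega x = - sg x"
proof -
  obtain n where n: "card x = Suc n" using assms by (metis card_0_eq not0_implies_Suc)
  then show ?thesis unfolding omega_def dim_def sg_def by simp
qed

lemma g0_sum:
  assumes G: "simplicial_complex G"
  shows "(\<Sum>x\<in>G. \<Sum>y\<in>G. g0 G x y) = euler_char G"
proof -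
  have fin: "finite G" using G by (simp add: simplicial_complex_def)
  have clos: "\<And>w v. w \<in> G \<Longrightarrow> v \<subseteq> w \<Longrightarrow> v \<noteq> {} \<Longrightarrow> v \<in> G"
    using G unfolding simplicial_complex_def by blast
  have fw: "\<And>w. w \<in> G \<Longrightarrow> finite w \<and> w \<noteq> {}"
    using G unfolding simplicial_complex_def by blast
  have S: "(\<Sum>x\<in>G. if x \<subseteq> w then sg x else 0) = -1" if w: "w \<in> G" for w
  proof -
    have "(\<Sum>x\<in>G. if x \<subseteq> w then sg x else 0) = (\<Sum>x\<in>{x\<in>G. x \<subseteq> w}. sg x)"
      using fin by (simp add: sum.inter_filter)
    also have "{x\<in>G. x \<subseteq> w} = Pow w - {{}}" using clos[OF w] fw by auto
    also have "(\<Sum>x\<in>Pow w - {{}}. sg x) = (\<Sum>x\<in>Pow w. sg x) - 1"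
      using fw[OF w] by (simp add: sum_diff1 sg_def)
    also have "\<dots> = -1" using pow_alt[of w] fw[OF w] by (simp add: sg_def)
    finally show ?thesis .
  qed
  have "(\<Sum>x\<in>G. \<Sum>y\<in>G. g0 G x y)
      = (\<Sum>x\<in>G. \<Sum>y\<in>G. \<Sum>w\<in>G. - sg w * ((if x \<subseteq> w then sg x else 0) * (if y \<subseteq> w then sg y else 0)))"
    unfolding g0_def by (auto simp add: sum_distrib_left intro!: sum.cong)
  also have "\<dots> = (\<Sum>x\<in>G. \<Sum>w\<in>G. \<Sum>y\<in>G. - sg w * ((if x \<subseteq> w then sg x else 0) * (if y \<subseteq> w then sg y else 0)))"
    by (intro sum.cong refl sum.swap)
  also have "\<dots> = (\<Sum>w\<in>G. \<Sum>x\<in>G. \<Sum>y\<in>G. - sg w * ((if x \<subseteq> w then sg x else 0) * (if y \<subseteq> w then sg y else 0)))"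
    by (rule sum.swap)
  also have "\<dots> = (\<Sum>w\<in>G. - sg w * ((\<Sum>x\<in>G. if x \<subseteq> w then sg x else 0) * (\<Sum>y\<in>G. if y \<subseteq> w then sg y else 0)))"
  proof (intro sum.cong refl)
    fix w assume "w \<in> G"
    let ?A = "\<lambda>x. if x \<subseteq> w then sg x else 0"
    have "(\<Sum>x\<in>G. ?A x) * (\<Sum>y\<in>G. ?A y) = (\<Sum>x\<in>G. \<Sum>y\<in>G. ?A x * ?A y)"
      by (rule sum_product)
    then have "- sg w * ((\<Sum>x\<in>G. ?A x) * (\<Sum>y\<in>G. ?A y)) = - sg w * (\<Sum>x\<in>G. \<Sum>y\<in>G. ?A x * ?A y)"
      by simp
    also have "\<dots> = (\<Sum>x\<in>G. \<Sum>y\<in>G. - sg w * (?A x * ?A y))"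
      by (simp only: sum_distrib_left)
    finally show "(\<Sum>x\<in>G. \<Sum>y\<in>G. - sg w * (?A x * ?A y)) = - sg w * ((\<Sum>x\<in>G. ?A x) * (\<Sum>y\<in>G. ?A y))"
      by simp
  qed
  also have "\<dots> = (\<Sum>w\<in>G. omega w)"
  proof (intro sum.cong refl)
    fix w assume w: "w \<in> G"
    show "- sg w * ((\<Sum>x\<in>G. if x \<subseteq> w then sg x else 0) * (\<Sum>y\<in>G. if y \<subseteq> w then sg y else 0)) = omega w"
      using S[OF w] fw[OF w] omega_sg[of w] by simp
  qed
  finally show ?thesis unfolding euler_char_def .
qed

theorem theorem2:
  fixes G :: "'a set set"
  assumes "simplicial_complex G"
  shows "(\<exists>g :: 'a set \<Rightarrow> 'a set \<Rightarrow> int. is_inverse_on G connection g)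
       \<and> (\<forall>g :: 'a set \<Rightarrow> 'a set \<Rightarrow> real. is_inverse_on G connection g \<longrightarrow>
            (\<Sum>x\<in>G. \<Sum>y\<in>G. g x y) = real_of_int (euler_char G))"
proof (intro conjI allI impI)
  show "\<exists>g :: 'a set \<Rightarrow> 'a set \<Rightarrow> int. is_inverse_on G connection g"
    using g0_inverse[OF assms] by blast
  fix g :: "'a set \<Rightarrow> 'a set \<Rightarrow> real"
  assume g: "is_inverse_on G connection g"
  have fin: "finite G" using assms by (simp add: simplicial_complex_def)
  have "(\<Sum>x\<in>G. \<Sum>y\<in>G. g x y) = (\<Sum>x\<in>G. \<Sum>y\<in>G. real_of_int (g0 G x y))"
    using inverse_unique[OF g g0_inverse_real[OF assms] fin] by (intro sum.cong) auto
  also have "\<dots> = real_of_int (euler_char G)"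
    using g0_sum[OF assms] by (simp flip: of_int_sum)
  finally show "(\<Sum>x\<in>G. \<Sum>y\<in>G. g x y) = real_of_int (euler_char G)" .
qed

end
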